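(* Let $\mathcal H$ be a family of graphs. The following are equivalent: (i) there is a constant $c=c(\mathcal H)$ such that every connected $\mathcal H$-free graph $G$ has fewer than $c$ vertices $v$ with $\mathrm{sdeg}(v)\ge 2$ (equivalently, fewer than $c$ cut vertices); (ii) there is a positive integer $n$ such that $\mathcal H\le \{K_n^*,\ K_{1,n}^*,\ P_n\}$.
   Context: All graphs are finite, simple, undirected. For graphs $H_1,H_2$, write $H_1\prec H_2$ if $H_2$ contains an induced subgraph isomorphic to $H_1$. A graph $G$ is $\mathcal H$-free if no $H\in\mathcal H$ satisfies $H\prec G$. For families $\mathcal H_1,\mathcal H_2$, write $\mathcal H_1\le\mathcal H_2$ if for every $H_2\in\mathcal H_2$ there is $H_1\in\mathcal H_1$ with $H_1\prec H_2$. For a vertex $v$ of $G$, the sharp degree is $\mathrm{sdeg}(v)=c(G-v)-c(G)+1$, where $c(\cdot)$ is the number of connected components. $K_n$ and $P_n$ are the complete graph and path on $n$ vertices. $K_{1,n}^*$ is obtained from the star $K_{1,n}$ by attaching a new pendant vertex to each leaf; $K_n^*$ is obtained from $K_n$ by attaching a new pendant vertex to each vertex. *)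

theory Defs
  imports Main
begin

type_synonym 'a graph = "'a set \<times> ('a \<Rightarrow> 'a \<Rightarrow> bool)"

definition is_graph :: "'a graph \<Rightarrow> bool" where
  "is_graph G \<longleftrightarrow> finite (fst G) \<and>
     (\<forall>x y. snd G x y \<longrightarrow> x \<in> fst G \<and> y \<in> fst G \<and> x \<noteq> y) \<and>
     (\<forall>x y. snd G x y \<longrightarrow> snd G y x)"

definition induced_sub :: "'a graph \<Rightarrow> 'b graph \<Rightarrow> bool" where
  "induced_sub H G \<longleftrightarrow> (\<exists>f. inj_on f (fst H) \<and> f ` fst H \<subseteq> fst G \<and>
     (\<forall>x\<in>fst H. \<forall>y\<in>fst H. snd H x y \<longleftrightarrow> snd G (f x) (f y)))"

definition H_free :: "'a graph set \<Rightarrow> 'b graph \<Rightarrow> bool" where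
  "H_free \<H> G \<longleftrightarrow> (\<forall>H\<in>\<H>. \<not> induced_sub H G)"

definition fam_le :: "'a graph set \<Rightarrow> 'b graph set \<Rightarrow> bool" where
  "fam_le \<H>1 \<H>2 \<longleftrightarrow> (\<forall>H2\<in>\<H>2. \<exists>H1\<in>\<H>1. induced_sub H1 H2)"

definition reach :: "'a graph \<Rightarrow> 'a \<Rightarrow> 'a \<Rightarrow> bool" where
  "reach G = (\<lambda>a b. a \<in> fst G \<and> b \<in> fst G \<and> snd G a b)\<^sup>*\<^sup>*"

definition ncomp :: "'a graph \<Rightarrow> nat" where
  "ncomp G = card ((\<lambda>v. {u \<in> fst G. reach G v u}) ` fst G)"

definition connected_graph :: "'a graph \<Rightarrow> bool" where
  "connected_graph G \<longleftrightarrow> fst G \<noteq> {} \<and> (\<forall>x\<in>fst G. \<forall>y\<in>fst G. reach G x y)"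

definition delete_vertex :: "'a graph \<Rightarrow> 'a \<Rightarrow> 'a graph" where
  "delete_vertex G v = (fst G - {v}, \<lambda>x y. snd G x y \<and> x \<noteq> v \<and> y \<noteq> v)"

definition sdeg :: "'a graph \<Rightarrow> 'a \<Rightarrow> int" where
  "sdeg G v = int (ncomp (delete_vertex G v)) - int (ncomp G) + 1"

definition path_graph :: "nat \<Rightarrow> nat graph" where
  "path_graph n = ({0..<n}, \<lambda>x y. x < n \<and> y < n \<and> (x + 1 = y \<or> y + 1 = x))"

text \<open>K_n^*: clique on 0..n-1, vertex n+i is a pendant attached to i.\<close>
definition clique_star :: "nat \<Rightarrow> nat graph" where
  "clique_star n = ({0..<2*n}, \<lambda>x y.
      (x < n \<and> y < n \<and> x \<noteq> y) \<or> (x < n \<and> y = n + x) \<or> (y < n \<and> x = n + y))"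

text \<open>K_{1,n}^*: centre 0, leaves 1..n, vertex n+i is a pendant attached to leaf i.\<close>
definition star_star :: "nat \<Rightarrow> nat graph" where
  "star_star n = ({0..<2*n+1}, \<lambda>x y.
      (x = 0 \<and> 1 \<le> y \<and> y \<le> n) \<or> (y = 0 \<and> 1 \<le> x \<and> x \<le> n) \<or>
      (1 \<le> x \<and> x \<le> n \<and> y = n + x) \<or> (1 \<le> y \<and> y \<le> n \<and> x = n + y))"

end

theory Submission
  imports Defs "HOL-Library.Ramsey"
begin

lemma rtranclp_sym_gen:
  assumes "\<And>a b. R a b \<Longrightarrow> R b a" and "R\<^sup>*\<^sup>* x y"
  shows "R\<^sup>*\<^sup>* y x"
  using assms(2)
proof (induction rule: rtranclp_induct)
  case base then show ?case by simp
next
  case (step y z)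
  then show ?case using assms(1) by (meson converse_rtranclp_into_rtranclp)
qed

lemma closed_reach:
  assumes "R\<^sup>*\<^sup>* a x" "a \<in> S" "\<And>u w. u \<in> S \<Longrightarrow> R u w \<Longrightarrow> w \<in> S"
  shows "x \<in> S"
  using assms(1) by (induction rule: rtranclp_induct) (auto intro: assms)

lemma induced_sub_trans:
  assumes "induced_sub H K" "induced_sub K G"
  shows "induced_sub H G"
proof -
  obtain f where f: "inj_on f (fst H)" "f ` fst H \<subseteq> fst K"
    "\<forall>x\<in>fst H. \<forall>y\<in>fst H. snd H x y \<longleftrightarrow> snd K (f x) (f y)"
    using assms(1) unfolding induced_sub_def by blast
  obtain g where g: "inj_on g (fst K)" "g ` fst K \<subseteq> fst G"
    "\<forall>x\<in>fst K. \<forall>y\<in>fst K. snd K x y \<longleftrightarrow> snd G (g x) (g y)"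
    using assms(2) unfolding induced_sub_def by blast
  have "inj_on (g \<circ> f) (fst H)" using f g by (meson comp_inj_on inj_on_subset)
  moreover have "(g \<circ> f) ` fst H \<subseteq> fst G" using f g by (auto simp: image_subset_iff)
  moreover have "\<forall>x\<in>fst H. \<forall>y\<in>fst H. snd H x y \<longleftrightarrow> snd G ((g \<circ> f) x) ((g \<circ> f) y)"
    using f g by (auto simp: image_subset_iff)
  ultimately show ?thesis unfolding induced_sub_def by blast
qed

lemma ncomp_connected:
  assumes "connected_graph G"
  shows "ncomp G = 1"
proof -
  have "(\<lambda>v. {u \<in> fst G. reach G v u}) ` fst G = {fst G}"
    using assms unfolding connected_graph_def by auto
  then show ?thesis unfolding ncomp_def by simp
qed

lemma ncomp_ge2:
  assumes "finite (fst G)" "a \<in> fst G" "b \<in> fst G" "\<not> reach G a b"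
  shows "ncomp G \<ge> 2"
proof -
  let ?c = "\<lambda>v. {u \<in> fst G. reach G v u}"
  have "b \<in> ?c b" using assms(3) unfolding reach_def by simp
  moreover have "b \<notin> ?c a" using assms(4) by simp
  ultimately have ne: "?c a \<noteq> ?c b" by blast
  have "{?c a, ?c b} \<subseteq> ?c ` fst G" using assms by auto
  moreover have "finite (?c ` fst G)" using assms(1) by simp
  ultimately have "card {?c a, ?c b} \<le> card (?c ` fst G)" by (rule card_mono[rotated])
  then show ?thesis using ne unfolding ncomp_def by simp
qed

lemma sdeg_ge2:
  assumes "connected_graph G" "finite (fst G)" "a \<in> fst G" "b \<in> fst G" "a \<noteq> v" "b \<noteq> v"
    "\<not> reach (delete_vertex G v) a b"
  shows "sdeg G v \<ge> 2"
proof -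
  have "ncomp (delete_vertex G v) \<ge> 2"
    by (rule ncomp_ge2) (use assms in \<open>auto simp: delete_vertex_def\<close>)
  then show ?thesis using ncomp_connected[OF assms(1)] unfolding sdeg_def by simp
qed

lemma connected_from:
  assumes "is_graph G" "z \<in> fst G" "\<And>x. x \<in> fst G \<Longrightarrow> reach G z x"
  shows "connected_graph G"
proof -
  define R where "R = (\<lambda>a b. a \<in> fst G \<and> b \<in> fst G \<and> snd G a b)"
  have sym: "\<And>a b. R a b \<Longrightarrow> R b a"
    using assms(1) unfolding is_graph_def R_def by auto
  have "reach G x y" if "x \<in> fst G" "y \<in> fst G" for x y
  proof -
    have "reach G x z" using rtranclp_sym_gen[of R, OF sym] assms(3)[OF that(1)] unfolding reach_def R_def[symmetric] by blast
    then show ?thesis using assms(3)[OF that(2)] unfolding reach_def by auto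
  qed
  then show ?thesis using assms(2) unfolding connected_graph_def by auto
qed

lemma is_graph_clique_star: "is_graph (clique_star n)"
  unfolding is_graph_def clique_star_def by auto

lemma is_graph_star_star: "is_graph (star_star n)"
  unfolding is_graph_def star_star_def by auto

lemma is_graph_path: "is_graph (path_graph n)"
  unfolding is_graph_def path_graph_def by auto

lemma conn_clique_star:
  assumes "n > 0" shows "connected_graph (clique_star n)"
proof (rule connected_from[OF is_graph_clique_star, of 0])
  show "0 \<in> fst (clique_star n)" using assms by (simp add: clique_star_def)
  fix x assume x: "x \<in> fst (clique_star n)"
  let ?R = "\<lambda>a b. a \<in> fst (clique_star n) \<and> b \<in> fst (clique_star n) \<and> snd (clique_star n) a b"
  have 1: "?R\<^sup>*\<^sup>* 0 j" if "j < n" for j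
  proof (cases "j = 0")
    case True then show ?thesis by simp
  next
    case False
    then have "?R 0 j" using that by (simp add: clique_star_def)
    then show ?thesis by blast
  qed
  show "reach (clique_star n) 0 x"
  proof (cases "x < n")
    case True then show ?thesis using 1 unfolding reach_def by blast
  next
    case False
    then obtain j where j: "x = n + j" "j < n" using x by (auto simp: clique_star_def) (metis add_diff_inverse_nat add_less_imp_less_left mult_2)
    have "?R j x" using j by (simp add: clique_star_def)
    from rtranclp.rtrancl_into_rtrancl[OF 1[OF j(2)] this] show ?thesis unfolding reach_def .
  qed
qed

lemma conn_star_star: "connected_graph (star_star n)"
proof (rule connected_from[OF is_graph_star_star, of 0])
  show "0 \<in> fst (star_star n)" by (simp add: star_star_def)
  fix x assume x: "x \<in> fst (star_star n)"
  let ?R = "\<lambda>a b. a \<in> fst (star_star n) \<and> b \<in> fst (star_star n) \<and> snd (star_star n) a b"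
  have 1: "?R\<^sup>*\<^sup>* 0 j" if "j \<le> n" for j
  proof (cases "j = 0")
    case True then show ?thesis by simp
  next
    case False
    then have "?R 0 j" using that by (simp add: star_star_def)
    then show ?thesis by blast
  qed
  show "reach (star_star n) 0 x"
  proof (cases "x \<le> n")
    case True then show ?thesis using 1 unfolding reach_def by blast
  next
    case False
    then obtain j where j: "x = n + j" "j \<le> n" "1 \<le> j" using x by (auto simp: star_star_def) (metis add_diff_inverse_nat less_or_eq_imp_le not_less_eq_eq plus_1_eq_Suc)
    have "?R j x" using j by (simp add: star_star_def)
    from rtranclp.rtrancl_into_rtrancl[OF 1[OF j(2)] this] show ?thesis unfolding reach_def .
  qed
qed

lemma conn_path:
  assumes "n > 0" shows "connected_graph (path_graph n)"
proof (rule connected_from[OF is_graph_path, of 0])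
  show "0 \<in> fst (path_graph n)" using assms by (simp add: path_graph_def)
  let ?R = "\<lambda>a b. a \<in> fst (path_graph n) \<and> b \<in> fst (path_graph n) \<and> snd (path_graph n) a b"
  have "j < n \<longrightarrow> ?R\<^sup>*\<^sup>* 0 j" for j
  proof (induction j)
    case 0 then show ?case by simp
  next
    case (Suc j)
    show ?case
    proof
      assume "Suc j < n"
      then have a: "?R j (Suc j)" by (simp add: path_graph_def)
      have b: "?R\<^sup>*\<^sup>* 0 j" using Suc \<open>Suc j < n\<close> by simp
      from rtranclp.rtrancl_into_rtrancl[OF b a] show "?R\<^sup>*\<^sup>* 0 (Suc j)" .
    qed
  qed
  then show "reach (path_graph n) 0 x" if "x \<in> fst (path_graph n)" for x
    using that unfolding reach_def by (simp add: path_graph_def)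
qed

lemma cut_clique_star:
  assumes "n \<ge> 2" "i < n"
  shows "sdeg (clique_star n) i \<ge> 2"
proof (rule sdeg_ge2[OF conn_clique_star, of _ "n + i" "if i = 0 then 1 else 0"])
  show "\<not> reach (delete_vertex (clique_star n) i) (n + i) (if i = 0 then 1 else 0)"
  proof
    assume "reach (delete_vertex (clique_star n) i) (n + i) (if i = 0 then 1 else 0)"
    then have "(if i = 0 then 1 else 0) \<in> {n + i}"
      unfolding reach_def
      by (rule closed_reach) (auto simp: delete_vertex_def clique_star_def)
    then show False using assms by (auto split: if_splits)
  qed
next
  show "0 < n" using assms by simp
  show "finite (fst (clique_star n))" by (simp add: clique_star_def)
  show "n + i \<in> fst (clique_star n)" using assms by (simp add: clique_star_def)
  show "(if i = 0 then 1 else 0) \<in> fst (clique_star n)" using assms by (simp add: clique_star_def)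
  show "n + i \<noteq> i" using assms by simp
  show "(if i = 0 then 1 else 0) \<noteq> i" by simp
qed

lemma cut_star_star:
  assumes "1 \<le> i" "i \<le> n"
  shows "sdeg (star_star n) i \<ge> 2"
proof (rule sdeg_ge2[OF conn_star_star, of _ "n + i" 0])
  show "\<not> reach (delete_vertex (star_star n) i) (n + i) 0"
  proof
    assume "reach (delete_vertex (star_star n) i) (n + i) 0"
    then have "(0::nat) \<in> {n + i}"
      unfolding reach_def
      by (rule closed_reach) (use assms in \<open>auto simp: delete_vertex_def star_star_def\<close>)
    then show False using assms by auto
  qed
qed (use assms in \<open>auto simp: star_star_def\<close>)

lemma cut_path:
  assumes "0 < i" "i + 1 < n"
  shows "sdeg (path_graph n) i \<ge> 2"
proof (rule sdeg_ge2[OF conn_path, of _ 0 "i + 1"])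
  show "\<not> reach (delete_vertex (path_graph n) i) 0 (i + 1)"
  proof
    assume "reach (delete_vertex (path_graph n) i) 0 (i + 1)"
    then have "i + 1 \<in> {..<i}"
      unfolding reach_def
      by (rule closed_reach) (use assms in \<open>auto simp: delete_vertex_def path_graph_def\<close>)
    then show False by auto
  qed
qed (use assms in \<open>auto simp: path_graph_def\<close>)

lemma many_cuts:
  assumes "H \<in> {clique_star (c + 2), star_star (c + 2), path_graph (c + 2)}"
  shows "is_graph H \<and> connected_graph H \<and> \<not> card {v \<in> fst H. sdeg H v \<ge> 2} < c"
proof -
  have fin: "finite (fst H)" using assms
    by (auto simp: clique_star_def star_star_def path_graph_def)
  consider "H = clique_star (c + 2)" | "H = star_star (c + 2)" | "H = path_graph (c + 2)"
    using assms by blast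
  then show ?thesis
  proof cases
    case 1
    have "{0..<c+2} \<subseteq> {v \<in> fst H. sdeg H v \<ge> 2}"
      using cut_clique_star[of "c+2"] 1 by (auto simp: clique_star_def)
    from card_mono[OF _ this] fin have "card {v \<in> fst H. sdeg H v \<ge> 2} \<ge> c + 2" by simp
    then show ?thesis using 1 is_graph_clique_star conn_clique_star by auto
  next
    case 2
    have "{1..c+2} \<subseteq> {v \<in> fst H. sdeg H v \<ge> 2}"
      using cut_star_star[of _ "c+2"] 2 by (auto simp: star_star_def)
    from card_mono[OF _ this] fin have "card {v \<in> fst H. sdeg H v \<ge> 2} \<ge> c + 2" by simp
    then show ?thesis using 2 is_graph_star_star conn_star_star by auto
  next
    case 3
    have "{1..c} \<subseteq> {v \<in> fst H. sdeg H v \<ge> 2}"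
      using cut_path[of _ "c+2"] 3 by (auto simp: path_graph_def)
    from card_mono[OF _ this] fin have "card {v \<in> fst H. sdeg H v \<ge> 2} \<ge> c" by simp
    then show ?thesis using 3 is_graph_path conn_path by auto
  qed
qed

locale cgraph =
  fixes V :: "nat set" and E :: "nat \<Rightarrow> nat \<Rightarrow> bool" and r :: nat
  assumes G: "is_graph (V, E)" and conn: "connected_graph (V, E)" and rV: "r \<in> V"
begin

definition adj where "adj a b \<longleftrightarrow> a \<in> V \<and> b \<in> V \<and> E a b"

lemma finV: "finite V" using G by (simp add: is_graph_def)
lemma Esym: "E x y \<Longrightarrow> E y x" using G by (simp add: is_graph_def)
lemma EV: "E x y \<Longrightarrow> x \<in> V \<and> y \<in> V" using G by (simp add: is_graph_def)
lemma Eirr: "\<not> E x x" using G by (auto simp: is_graph_def)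
lemma adjE: "adj a b \<longleftrightarrow> E a b" using EV adj_def by auto

lemma reach_adj: "reach (V, E) = adj\<^sup>*\<^sup>*"
  unfolding reach_def adj_def by simp

lemma reach_r: "x \<in> V \<Longrightarrow> adj\<^sup>*\<^sup>* r x"
  using conn rV unfolding connected_graph_def reach_adj by auto

definition dist where "dist x = (LEAST k. (adj ^^ k) r x)"

lemma dist_pow: "x \<in> V \<Longrightarrow> (adj ^^ dist x) r x"
proof -
  assume "x \<in> V"
  then have "adj\<^sup>*\<^sup>* r x" by (rule reach_r)
  then obtain k where "(adj ^^ k) r x" unfolding rtranclp_power by blast
  then show ?thesis unfolding dist_def by (rule LeastI)
qed

lemma dist_le: "(adj ^^ k) r x \<Longrightarrow> dist x \<le> k"
  unfolding dist_def by (rule Least_le)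

lemma dist_edge: "E x y \<Longrightarrow> dist y \<le> dist x + 1"
proof -
  assume e: "E x y"
  then have "(adj ^^ Suc (dist x)) r y"
    using dist_pow[of x] EV[OF e] by (meson adjE relpowp_Suc_I)
  then show ?thesis using dist_le by simp
qed

lemma dist_edge2: "E x y \<Longrightarrow> dist x \<le> dist y + 1 \<and> dist y \<le> dist x + 1"
  using dist_edge Esym by blast

lemma dist0: "x \<in> V \<Longrightarrow> dist x = 0 \<Longrightarrow> x = r"
  using dist_pow[of x] by simp

lemma dist_parent:
  assumes "x \<in> V" "dist x = Suc k"
  shows "\<exists>p. E p x \<and> dist p = k"
proof -
  have "(adj ^^ Suc k) r x" using dist_pow[OF assms(1)] assms(2) by simp
  then obtain p where p: "(adj ^^ k) r p" "adj p x" by (rule relpowp_Suc_E)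
  have "dist p \<le> k" using dist_le[OF p(1)] .
  moreover have "dist x \<le> dist p + 1" using dist_edge p(2) adjE by blast
  ultimately show ?thesis using p(2) assms(2) adjE by auto
qed

lemma chain:
  "x \<in> V \<Longrightarrow> dist x = m \<Longrightarrow> \<exists>f. f m = x \<and> (\<forall>k\<le>m. f k \<in> V \<and> dist (f k) = k) \<and> (\<forall>k<m. E (f k) (f (Suc k)))"
proof (induction m arbitrary: x)
  case 0
  then show ?case by (intro exI[of _ "\<lambda>_. x"]) auto
next
  case (Suc m)
  obtain p where p: "E p x" "dist p = m" using dist_parent Suc.prems by blast
  obtain f where f: "f m = p" "\<forall>k\<le>m. f k \<in> V \<and> dist (f k) = k" "\<forall>k<m. E (f k) (f (Suc k))"
    using Suc.IH[of p] p EV by blast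
  define g where "g = f(Suc m := x)"
  have "g (Suc m) = x" by (simp add: g_def)
  moreover have "\<forall>k\<le>Suc m. g k \<in> V \<and> dist (g k) = k"
    using f Suc.prems by (auto simp: g_def le_Suc_eq)
  moreover have "\<forall>k<Suc m. E (g k) (g (Suc k))"
    using f p by (auto simp: g_def less_Suc_eq)
  ultimately show ?case by blast
qed

lemma path_embed:
  assumes "n > 0" "x \<in> V" "dist x + 1 \<ge> n"
  shows "induced_sub (path_graph n) (V, E)"
proof -
  obtain f where f: "f (dist x) = x" "\<forall>k\<le>dist x. f k \<in> V \<and> dist (f k) = k"
    "\<forall>k<dist x. E (f k) (f (Suc k))"
    using chain[OF assms(2) refl] by blast
  have fk: "f k \<in> V" "dist (f k) = k" if "k < n" for k using f that assms(3) by auto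
  have "inj_on f {0..<n}"
    by (rule inj_onI) (metis atLeastLessThan_iff fk(2))
  moreover have "f ` {0..<n} \<subseteq> V" using fk by auto
  moreover have "E (f i) (f j) \<longleftrightarrow> (i + 1 = j \<or> j + 1 = i)" if "i < n" "j < n" for i j
  proof
    assume e: "E (f i) (f j)"
    then have "i \<noteq> j" using Eirr by auto
    then show "i + 1 = j \<or> j + 1 = i" using dist_edge2[OF e] fk that by auto
  next
    assume "i + 1 = j \<or> j + 1 = i"
    then show "E (f i) (f j)" using f(3) that assms(3) Esym by auto
  qed
  ultimately show ?thesis unfolding induced_sub_def path_graph_def by auto
qed

definition D where "D c a b \<longleftrightarrow> E a b \<and> a \<noteq> c \<and> b \<noteq> c"

lemma reach_del: "reach (delete_vertex (V, E) c) = (D c)\<^sup>*\<^sup>*"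
proof -
  have "(\<lambda>a b. a \<in> fst (delete_vertex (V, E) c) \<and> b \<in> fst (delete_vertex (V, E) c) \<and> snd (delete_vertex (V, E) c) a b) = D c"
    using EV by (auto simp: delete_vertex_def D_def fun_eq_iff)
  then show ?thesis unfolding reach_def by simp
qed

definition Bs where "Bs c = {x \<in> V. x \<noteq> c \<and> \<not> (D c)\<^sup>*\<^sup>* r x}"

lemma F1: "x \<in> Bs c \<Longrightarrow> y \<noteq> c \<Longrightarrow> E x y \<Longrightarrow> y \<in> Bs c"
proof -
  assume a: "x \<in> Bs c" "y \<noteq> c" "E x y"
  have "y \<in> V" using EV a(3) by blast
  moreover have "\<not> (D c)\<^sup>*\<^sup>* r y"
  proof
    assume "(D c)\<^sup>*\<^sup>* r y"
    moreover have "D c y x" using a Esym by (auto simp: D_def Bs_def)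
    ultimately have "(D c)\<^sup>*\<^sup>* r x" by simp
    then show False using a(1) by (simp add: Bs_def)
  qed
  ultimately show ?thesis using a(2) by (simp add: Bs_def)
qed

lemma F2: "x \<in> V \<Longrightarrow> x \<noteq> c \<Longrightarrow> dist x \<le> dist c \<Longrightarrow> (D c)\<^sup>*\<^sup>* r x"
proof (induction "dist x" arbitrary: x)
  case 0
  then show ?case using dist0 by fastforce
next
  case (Suc k)
  obtain p where p: "E p x" "dist p = k" using dist_parent Suc.prems Suc.hyps(2) by metis
  have "p \<noteq> c" using p Suc by auto
  then have "(D c)\<^sup>*\<^sup>* r p" using Suc p EV by auto
  moreover have "D c p x" using p Suc.prems \<open>p \<noteq> c\<close> by (simp add: D_def)
  ultimately show ?case by simp
qed

lemma F2': "x \<in> Bs c \<Longrightarrow> c \<in> V \<Longrightarrow> dist x > dist c"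
  using F2 by (force simp: Bs_def)

lemma D_sym: "D c a b \<Longrightarrow> D c b a" using Esym by (auto simp: D_def)

lemma F3:
  assumes "c \<in> V" "c \<noteq> r" "sdeg (V, E) c \<ge> 2"
  shows "\<exists>d \<in> Bs c. E c d"
proof -
  have "ncomp (delete_vertex (V, E) c) \<ge> 2"
    using assms(3) ncomp_connected[OF conn] unfolding sdeg_def by simp
  have "\<exists>x \<in> V - {c}. \<not> (D c)\<^sup>*\<^sup>* r x"
  proof (rule ccontr)
    assume "\<not> ?thesis"
    then have all: "\<forall>x \<in> V - {c}. (D c)\<^sup>*\<^sup>* r x" by blast
    let ?cl = "\<lambda>v. {u \<in> fst (delete_vertex (V, E) c). reach (delete_vertex (V, E) c) v u}"
    have eq: "?cl v = ?cl r" if "v \<in> V - {c}" for v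
    proof -
      have "(D c)\<^sup>*\<^sup>* v r" using rtranclp_sym_gen[of "D c", OF D_sym] all that by blast
      moreover have "(D c)\<^sup>*\<^sup>* r v" using all that by blast
      ultimately show ?thesis unfolding reach_del by (auto intro: rtranclp_trans)
    qed
    have fd: "fst (delete_vertex (V, E) c) = V - {c}" by (simp add: delete_vertex_def)
    have rin: "r \<in> V - {c}" using rV assms(2) by simp
    have "?cl ` (V - {c}) = (\<lambda>_. ?cl r) ` (V - {c})"
      by (rule image_cong) (rule refl, rule eq)
    also have "\<dots> = {?cl r}" using rin by (rule image_constant)
    finally have "?cl ` fst (delete_vertex (V, E) c) = {?cl r}" unfolding fd .
    then have "ncomp (delete_vertex (V, E) c) = 1" unfolding ncomp_def by simp
    then show False using \<open>ncomp (delete_vertex (V, E) c) \<ge> 2\<close> by simp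
  qed
  then obtain x where x: "x \<in> Bs c" by (auto simp: Bs_def)
  have rB: "r \<notin> Bs c" by (simp add: Bs_def)
  have "adj\<^sup>*\<^sup>* a b \<Longrightarrow> a \<in> Bs c \<Longrightarrow> b \<notin> Bs c \<Longrightarrow> \<exists>d \<in> Bs c. E c d" for a b
  proof (induction rule: converse_rtranclp_induct)
    case base then show ?case by simp
  next
    case (step a a')
    show ?case
    proof (cases "a' \<in> Bs c")
      case True then show ?thesis using step by blast
    next
      case False
      then have "a' = c" using F1[of a c a'] step adjE by blast
      then show ?thesis using step adjE Esym by blast
    qed
  qed
  moreover have "adj\<^sup>*\<^sup>* x r"
    using rtranclp_sym_gen[of adj] reach_r[of x] x Esym adjE by (auto simp: Bs_def)
  ultimately show ?thesis using x rB by blast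
qed

end

lemma ramsey_nat:
  "\<exists>N::nat. \<forall>(X::nat set) (R::nat \<Rightarrow> nat \<Rightarrow> bool). finite X \<and> card X \<ge> N \<and> (\<forall>a b. R a b \<longrightarrow> R b a) \<longrightarrow>
     (\<exists>Y\<subseteq>X. card Y = m \<and> (\<forall>a\<in>Y. \<forall>b\<in>Y. a \<noteq> b \<longrightarrow> R a b) \<or>
                card Y = k \<and> (\<forall>a\<in>Y. \<forall>b\<in>Y. a \<noteq> b \<longrightarrow> \<not> R a b))"
proof -
  obtain N where N: "\<forall>(X::nat set) (Es::nat set set). finite X \<and> card X \<ge> N \<longrightarrow>
    (\<exists>Y \<subseteq> X. card Y = m \<and> clique Y Es \<or> card Y = k \<and> indep Y Es)"
    using ramsey2[where 'a = nat, of m k] by blast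
  show ?thesis
  proof (intro exI[of _ N] allI impI)
    fix X :: "nat set" and R :: "nat \<Rightarrow> nat \<Rightarrow> bool"
    assume a: "finite X \<and> card X \<ge> N \<and> (\<forall>a b. R a b \<longrightarrow> R b a)"
    let ?Es = "{{a, b} | a b. R a b}"
    have iff: "{v, w} \<in> ?Es \<longleftrightarrow> R v w" for v w
    proof
      assume "{v, w} \<in> ?Es"
      then obtain a b where "{v, w} = {a, b}" "R a b" by blast
      then show "R v w" using a by (metis doubleton_eq_iff)
    qed blast
    obtain Y where "Y \<subseteq> X" "card Y = m \<and> clique Y ?Es \<or> card Y = k \<and> indep Y ?Es"
      using N a by blast
    then show "\<exists>Y\<subseteq>X. card Y = m \<and> (\<forall>a\<in>Y. \<forall>b\<in>Y. a \<noteq> b \<longrightarrow> R a b) \<or>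
                card Y = k \<and> (\<forall>a\<in>Y. \<forall>b\<in>Y. a \<noteq> b \<longrightarrow> \<not> R a b)"
      unfolding clique_def indep_def iff by blast
  qed
qed

definition RN :: "nat \<Rightarrow> nat \<Rightarrow> nat" where
  "RN m k = (SOME N. \<forall>(X::nat set) (R::nat \<Rightarrow> nat \<Rightarrow> bool). finite X \<and> card X \<ge> N \<and> (\<forall>a b. R a b \<longrightarrow> R b a) \<longrightarrow>
     (\<exists>Y\<subseteq>X. card Y = m \<and> (\<forall>a\<in>Y. \<forall>b\<in>Y. a \<noteq> b \<longrightarrow> R a b) \<or>
                card Y = k \<and> (\<forall>a\<in>Y. \<forall>b\<in>Y. a \<noteq> b \<longrightarrow> \<not> R a b)))"

lemma RN:
  fixes X :: "nat set" and R :: "nat \<Rightarrow> nat \<Rightarrow> bool"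
  assumes "finite X" "card X \<ge> RN m k" "\<And>a b. R a b \<Longrightarrow> R b a"
  shows "\<exists>Y\<subseteq>X. card Y = m \<and> (\<forall>a\<in>Y. \<forall>b\<in>Y. a \<noteq> b \<longrightarrow> R a b) \<or>
                card Y = k \<and> (\<forall>a\<in>Y. \<forall>b\<in>Y. a \<noteq> b \<longrightarrow> \<not> R a b)"
proof -
  have "\<forall>(X::nat set) (R::nat \<Rightarrow> nat \<Rightarrow> bool). finite X \<and> card X \<ge> RN m k \<and> (\<forall>a b. R a b \<longrightarrow> R b a) \<longrightarrow>
     (\<exists>Y\<subseteq>X. card Y = m \<and> (\<forall>a\<in>Y. \<forall>b\<in>Y. a \<noteq> b \<longrightarrow> R a b) \<or>
                card Y = k \<and> (\<forall>a\<in>Y. \<forall>b\<in>Y. a \<noteq> b \<longrightarrow> \<not> R a b))"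
    unfolding RN_def by (rule someI_ex) (rule ramsey_nat)
  from this[rule_format, of X R] assms show ?thesis by auto
qed

lemma card_filter_sum: "finite X \<Longrightarrow> card {b \<in> X. P b} = (\<Sum>b\<in>X. if P b then 1 else 0)"
  using sum.inter_filter[of X "\<lambda>_. 1::nat" P] by simp

lemma low_in:
  fixes Q :: "nat \<Rightarrow> nat \<Rightarrow> bool"
  assumes "finite X" "X \<noteq> {}" "\<forall>a\<in>X. card {b \<in> X. Q a b} < n"
  shows "\<exists>a\<in>X. card {b \<in> X. Q b a} < n"
proof (rule ccontr)
  assume "\<not> ?thesis"
  then have ge: "\<forall>a\<in>X. card {b \<in> X. Q b a} \<ge> n" by auto
  have "(\<Sum>a\<in>X. card {b \<in> X. Q b a}) = (\<Sum>a\<in>X. \<Sum>b\<in>X. if Q b a then 1 else 0)"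
    using assms(1) by (simp add: card_filter_sum)
  also have "\<dots> = (\<Sum>b\<in>X. \<Sum>a\<in>X. if Q b a then 1 else 0)" by (rule sum.swap)
  also have "\<dots> = (\<Sum>b\<in>X. card {a \<in> X. Q b a})"
    using assms(1) by (simp add: card_filter_sum)
  also have "\<dots> < (\<Sum>b\<in>X. n)" using assms by (intro sum_strict_mono) auto
  also have "\<dots> \<le> (\<Sum>a\<in>X. card {b \<in> X. Q b a})" using ge by (intro sum_mono) auto
  finally show False by simp
qed

lemma greedy:
  fixes Q :: "nat \<Rightarrow> nat \<Rightarrow> bool"
  assumes "n > 0"
  shows "finite X \<Longrightarrow> \<forall>a\<in>X. card {b \<in> X. Q a b} < n \<Longrightarrow> card X \<ge> 2 * n * k \<Longrightarrow>
    \<exists>Y\<subseteq>X. card Y \<ge> k \<and> (\<forall>a\<in>Y. \<forall>b\<in>Y. a \<noteq> b \<longrightarrow> \<not> Q a b)"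
proof (induction k arbitrary: X)
  case 0
  then show ?case by (intro exI[of _ "{}"]) auto
next
  case (Suc k)
  have "X \<noteq> {}" using Suc.prems assms by auto
  then obtain a where a: "a \<in> X" "card {b \<in> X. Q b a} < n" using low_in Suc.prems by blast
  define X' where "X' = X - ({a} \<union> {b \<in> X. Q a b} \<union> {b \<in> X. Q b a})"
  have fX': "finite X'" using Suc.prems by (simp add: X'_def)
  have "card ({a} \<union> {b \<in> X. Q a b} \<union> {b \<in> X. Q b a}) \<le> card {a} + card {b \<in> X. Q a b} + card {b \<in> X. Q b a}"
    by (meson card_Un_le le_trans add_le_mono order_refl)
  also have "\<dots> \<le> 2 * n"
  proof -
    have c1: "card {b \<in> X. Q a b} < n" using Suc.prems(2) a(1) by blast
    then show ?thesis using a(2) by simp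
  qed
  finally have rem: "card ({a} \<union> {b \<in> X. Q a b} \<union> {b \<in> X. Q b a}) \<le> 2 * n" .
  have "card X \<le> card X' + card ({a} \<union> {b \<in> X. Q a b} \<union> {b \<in> X. Q b a})"
  proof -
    have "X \<subseteq> X' \<union> ({a} \<union> {b \<in> X. Q a b} \<union> {b \<in> X. Q b a})" by (auto simp: X'_def)
    then have "card X \<le> card (X' \<union> ({a} \<union> {b \<in> X. Q a b} \<union> {b \<in> X. Q b a}))"
      using Suc.prems fX' by (intro card_mono) auto
    also have "\<dots> \<le> card X' + card ({a} \<union> {b \<in> X. Q a b} \<union> {b \<in> X. Q b a})" by (rule card_Un_le)
    finally show ?thesis .
  qed
  then have cX': "card X' \<ge> 2 * n * k" using rem Suc.prems(3) by simp
  have "\<forall>a\<in>X'. card {b \<in> X'. Q a b} < n"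
  proof
    fix x assume "x \<in> X'"
    then have "x \<in> X" by (simp add: X'_def)
    have "card {b \<in> X'. Q x b} \<le> card {b \<in> X. Q x b}"
      using Suc.prems(1) by (intro card_mono) (auto simp: X'_def)
    then show "card {b \<in> X'. Q x b} < n" using Suc.prems(2) \<open>x \<in> X\<close> by fastforce
  qed
  then obtain Y where Y: "Y \<subseteq> X'" "card Y \<ge> k" "\<forall>a\<in>Y. \<forall>b\<in>Y. a \<noteq> b \<longrightarrow> \<not> Q a b"
    using Suc.IH[OF fX'] cX' by blast
  have "a \<notin> Y" using Y(1) by (auto simp: X'_def)
  moreover have "finite Y" using Y(1) fX' finite_subset by blast
  ultimately have "card (insert a Y) \<ge> Suc k" using Y(2) by simp
  moreover have "insert a Y \<subseteq> X" using Y(1) a(1) by (auto simp: X'_def)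
  moreover have "\<forall>x\<in>insert a Y. \<forall>y\<in>insert a Y. x \<noteq> y \<longrightarrow> \<not> Q x y"
    using Y a(1) by (auto simp: X'_def)
  ultimately show ?case by blast
qed

lemma pigeon:
  assumes "finite A" "\<forall>x\<in>A. f x < n" "card A \<ge> n * M" "n > 0"
  shows "\<exists>l<n. card {x \<in> A. f x = l} \<ge> M"
proof (rule ccontr)
  assume "\<not> ?thesis"
  then have lt: "\<forall>l<n. card {x \<in> A. f x = l} < M" by auto
  have "A = (\<Union>l\<in>{..<n}. {x \<in> A. f x = l})" using assms(2) by auto
  then have "card A \<le> (\<Sum>l\<in>{..<n}. card {x \<in> A. f x = l})" by (metis card_UN_le finite_lessThan)
  also have "\<dots> < (\<Sum>l\<in>{..<n}. M)" using lt assms(4) by (intro sum_strict_mono) auto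
  finally show False using assms(3) by simp
qed

context cgraph begin

lemma Esym_iff: "E x y \<longleftrightarrow> E y x" using Esym by blast

lemma sun_embed:
  fixes I :: "nat set" and a b :: "nat \<Rightarrow> nat"
  assumes fin: "finite I"
    and v: "\<forall>i\<in>I. a i \<in> V \<and> b i \<in> V \<and> E (a i) (b i)"
    and p: "\<forall>i\<in>I. \<forall>j\<in>I. i \<noteq> j \<longrightarrow> E (a i) (a j) \<and> \<not> E (a i) (b j) \<and> b i \<noteq> b j \<and> \<not> E (b i) (b j)"
  shows "induced_sub (clique_star (card I)) (V, E)"
proof -
  let ?n = "card I"
  obtain h where h: "bij_betw h {0..<?n} I" using ex_bij_betw_nat_finite[OF fin] by blast
  have hI: "k < ?n \<Longrightarrow> h k \<in> I" for k using h by (auto simp: bij_betw_def)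
  have hinj: "k < ?n \<Longrightarrow> l < ?n \<Longrightarrow> h k = h l \<longleftrightarrow> k = l" for k l
    using h by (auto simp: bij_betw_def inj_on_def)
  have aa: "i \<in> I \<Longrightarrow> j \<in> I \<Longrightarrow> E (a i) (a j) \<longleftrightarrow> i \<noteq> j" for i j
    using p Eirr by (cases "i = j") auto
  have ab: "i \<in> I \<Longrightarrow> j \<in> I \<Longrightarrow> E (a i) (b j) \<longleftrightarrow> i = j" for i j
    using p v by (cases "i = j") auto
  have ba: "i \<in> I \<Longrightarrow> j \<in> I \<Longrightarrow> E (b i) (a j) \<longleftrightarrow> i = j" for i j
    using ab[of j i] by (simp add: Esym_iff eq_commute)
  have bb: "i \<in> I \<Longrightarrow> j \<in> I \<Longrightarrow> \<not> E (b i) (b j)" for i j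
    using p Eirr by (cases "i = j") auto
  have ainj: "i \<in> I \<Longrightarrow> j \<in> I \<Longrightarrow> a i = a j \<longleftrightarrow> i = j" for i j
    using aa[of i j] Eirr by auto
  have binj: "i \<in> I \<Longrightarrow> j \<in> I \<Longrightarrow> b i = b j \<longleftrightarrow> i = j" for i j
    using p by (cases "i = j") auto
  have abne: "i \<in> I \<Longrightarrow> j \<in> I \<Longrightarrow> a i \<noteq> b j" for i j
  proof
    assume ij: "i \<in> I" "j \<in> I" "a i = b j"
    then have "E (b j) (b i)" using v by auto
    then show False using bb ij by blast
  qed
  define f where "f k = (if k < ?n then a (h k) else b (h (k - ?n)))" for k
  have "inj_on f {0..<2 * ?n}"
  proof (rule inj_onI)
    fix x y assume xy: "x \<in> {0..<2 * ?n}" "y \<in> {0..<2 * ?n}" "f x = f y"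
    show "x = y"
    proof (cases "x < ?n"; cases "y < ?n")
      assume "x < ?n" "y < ?n" then show ?thesis using xy hI hinj ainj by (auto simp: f_def)
    next
      assume "x < ?n" "\<not> y < ?n" then show ?thesis using xy hI abne by (auto simp: f_def)
    next
      assume a1: "\<not> x < ?n" "y < ?n"
      then have "x - ?n < ?n" using xy by auto
      then show ?thesis using xy hI abne a1 by (auto simp: f_def) (metis hI)
    next
      assume a1: "\<not> x < ?n" "\<not> y < ?n"
      then have "x - ?n < ?n" "y - ?n < ?n" using xy by auto
      then show ?thesis using xy a1 hI hinj binj by (auto simp: f_def)
    qed
  qed
  moreover have "f ` {0..<2 * ?n} \<subseteq> V"
    using v hI by (auto simp: f_def)
  moreover have "snd (clique_star ?n) x y \<longleftrightarrow> E (f x) (f y)" if xy: "x < 2 * ?n" "y < 2 * ?n" for x y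
  proof (cases "x < ?n"; cases "y < ?n")
    assume "x < ?n" "y < ?n" then show ?thesis using hI hinj aa by (auto simp: f_def clique_star_def)
  next
    assume a1: "x < ?n" "\<not> y < ?n"
    then have "y - ?n < ?n" using xy by auto
    then show ?thesis using a1 hI hinj ab by (auto simp: f_def clique_star_def)
  next
    assume a1: "\<not> x < ?n" "y < ?n"
    then have "x - ?n < ?n" using xy by auto
    then show ?thesis using a1 hI hinj ba by (auto simp: f_def clique_star_def)
  next
    assume a1: "\<not> x < ?n" "\<not> y < ?n"
    then have "x - ?n < ?n" "y - ?n < ?n" using xy by auto
    then show ?thesis using a1 hI bb by (auto simp: f_def clique_star_def)
  qed
  ultimately show ?thesis unfolding induced_sub_def by (auto simp: clique_star_def)
qed

lemma spider_embed:
  fixes I :: "nat set" and a b :: "nat \<Rightarrow> nat"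
  assumes fin: "finite I" and uV: "u \<in> V"
    and v: "\<forall>i\<in>I. a i \<in> V \<and> b i \<in> V \<and> E (a i) (b i) \<and> E u (a i) \<and> \<not> E u (b i) \<and> u \<noteq> b i"
    and p: "\<forall>i\<in>I. \<forall>j\<in>I. i \<noteq> j \<longrightarrow> a i \<noteq> a j \<and> \<not> E (a i) (a j) \<and> \<not> E (a i) (b j) \<and> b i \<noteq> b j \<and> \<not> E (b i) (b j)"
  shows "induced_sub (star_star (card I)) (V, E)"
proof -
  let ?n = "card I"
  obtain h where h: "bij_betw h {0..<?n} I" using ex_bij_betw_nat_finite[OF fin] by blast
  have hI: "k < ?n \<Longrightarrow> h k \<in> I" for k using h by (auto simp: bij_betw_def)
  have hinj: "k < ?n \<Longrightarrow> l < ?n \<Longrightarrow> h k = h l \<longleftrightarrow> k = l" for k l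
    using h by (auto simp: bij_betw_def inj_on_def)
  have aa: "i \<in> I \<Longrightarrow> j \<in> I \<Longrightarrow> \<not> E (a i) (a j)" for i j
    using p Eirr by (cases "i = j") auto
  have ab: "i \<in> I \<Longrightarrow> j \<in> I \<Longrightarrow> E (a i) (b j) \<longleftrightarrow> i = j" for i j
    using p v by (cases "i = j") auto
  have ba: "i \<in> I \<Longrightarrow> j \<in> I \<Longrightarrow> E (b i) (a j) \<longleftrightarrow> i = j" for i j
    using ab[of j i] by (simp add: Esym_iff eq_commute)
  have bb: "i \<in> I \<Longrightarrow> j \<in> I \<Longrightarrow> \<not> E (b i) (b j)" for i j
    using p Eirr by (cases "i = j") auto
  have ainj: "i \<in> I \<Longrightarrow> j \<in> I \<Longrightarrow> a i = a j \<longleftrightarrow> i = j" for i j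
    using p by (cases "i = j") auto
  have binj: "i \<in> I \<Longrightarrow> j \<in> I \<Longrightarrow> b i = b j \<longleftrightarrow> i = j" for i j
    using p by (cases "i = j") auto
  have abne: "i \<in> I \<Longrightarrow> j \<in> I \<Longrightarrow> a i \<noteq> b j" for i j
  proof
    assume ij: "i \<in> I" "j \<in> I" "a i = b j"
    then have "E (b j) (b i)" using v by auto
    then show False using bb ij by blast
  qed
  have ua: "i \<in> I \<Longrightarrow> E u (a i)" for i using v by blast
  have au: "i \<in> I \<Longrightarrow> E (a i) u" for i using v Esym by blast
  have ub: "i \<in> I \<Longrightarrow> \<not> E u (b i)" for i using v by blast
  have bu: "i \<in> I \<Longrightarrow> \<not> E (b i) u" for i using v Esym by blast
  have una: "i \<in> I \<Longrightarrow> u \<noteq> a i" for i using ua Eirr by metis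
  have unb: "i \<in> I \<Longrightarrow> u \<noteq> b i" for i using v by blast
  have hA: "k < ?n \<Longrightarrow> l < ?n \<Longrightarrow> a (h k) = a (h l) \<longleftrightarrow> k = l" for k l using ainj hinj hI by metis
  have hB: "k < ?n \<Longrightarrow> l < ?n \<Longrightarrow> b (h k) = b (h l) \<longleftrightarrow> k = l" for k l using binj hinj hI by metis
  have hAB: "k < ?n \<Longrightarrow> l < ?n \<Longrightarrow> a (h k) \<noteq> b (h l)" for k l using abne hI by metis
  have hua: "k < ?n \<Longrightarrow> u \<noteq> a (h k)" for k using una hI by metis
  have hua': "k < ?n \<Longrightarrow> a (h k) \<noteq> u" for k using hua by metis
  have hub': "k < ?n \<Longrightarrow> b (h k) \<noteq> u" for k using unb hI by metis
  have hBA: "k < ?n \<Longrightarrow> l < ?n \<Longrightarrow> b (h k) \<noteq> a (h l)" for k l using abne hI by metis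
  have hub: "k < ?n \<Longrightarrow> u \<noteq> b (h k)" for k using unb hI by metis
  have hEaa: "k < ?n \<Longrightarrow> l < ?n \<Longrightarrow> \<not> E (a (h k)) (a (h l))" for k l using aa hI by metis
  have hEab: "k < ?n \<Longrightarrow> l < ?n \<Longrightarrow> E (a (h k)) (b (h l)) \<longleftrightarrow> k = l" for k l using ab hinj hI by metis
  have hEba: "k < ?n \<Longrightarrow> l < ?n \<Longrightarrow> E (b (h k)) (a (h l)) \<longleftrightarrow> k = l" for k l using ba hinj hI by metis
  have hEbb: "k < ?n \<Longrightarrow> l < ?n \<Longrightarrow> \<not> E (b (h k)) (b (h l))" for k l using bb hI by metis
  have hEua: "k < ?n \<Longrightarrow> E u (a (h k))" for k using ua hI by metis
  have hEau: "k < ?n \<Longrightarrow> E (a (h k)) u" for k using au hI by metis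
  have hEub: "k < ?n \<Longrightarrow> \<not> E u (b (h k))" for k using ub hI by metis
  have hEbu: "k < ?n \<Longrightarrow> \<not> E (b (h k)) u" for k using bu hI by metis
  define f where "f k = (if k = 0 then u else if k \<le> ?n then a (h (k - 1)) else b (h (k - ?n - 1)))" for k
  have reg: "k = 0 \<or> (0 < k \<and> k \<le> ?n \<and> k - 1 < ?n) \<or> (?n < k \<and> k - ?n - 1 < ?n)" if "k < 2 * ?n + 1" for k
    using that by auto
  have "inj_on f {0..<2 * ?n + 1}"
  proof (rule inj_onI)
    fix x y assume xy: "x \<in> {0..<2 * ?n + 1}" "y \<in> {0..<2 * ?n + 1}" "f x = f y"
    have rx: "x = 0 \<or> (0 < x \<and> x \<le> ?n \<and> x - 1 < ?n) \<or> (?n < x \<and> x - ?n - 1 < ?n)"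
      using xy(1) reg by auto
    have ry: "y = 0 \<or> (0 < y \<and> y \<le> ?n \<and> y - 1 < ?n) \<or> (?n < y \<and> y - ?n - 1 < ?n)"
      using xy(2) reg by auto
    from rx ry show "x = y"
    proof (elim disjE conjE)
    qed (use xy(3) hA hB hAB hua hub hua' hub' hBA in \<open>auto simp: f_def\<close>)
  qed
  moreover have "f ` {0..<2 * ?n + 1} \<subseteq> V"
    using v hI uV by (auto simp: f_def)
  moreover have "snd (star_star ?n) x y \<longleftrightarrow> E (f x) (f y)" if xy: "x < 2 * ?n + 1" "y < 2 * ?n + 1" for x y
    using reg[OF xy(1)] reg[OF xy(2)]
  proof (elim disjE conjE)
  qed (use hEaa hEab hEba hEbb hEua hEau hEub hEbu Eirr in \<open>auto simp: f_def star_star_def\<close>)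
  ultimately show ?thesis unfolding induced_sub_def by (auto simp: star_star_def)
qed

end

fun gg :: "nat \<Rightarrow> nat \<Rightarrow> nat" where
  "gg n 0 = 2"
| "gg n (Suc l) = 2 * n * RN n (gg n l)"

context cgraph begin

definition fam :: "nat \<Rightarrow> nat set \<Rightarrow> (nat \<Rightarrow> nat) \<Rightarrow> (nat \<Rightarrow> nat) \<Rightarrow> bool" where
  "fam l I a b \<longleftrightarrow> finite I \<and>
     (\<forall>i\<in>I. a i \<in> V \<and> b i \<in> V \<and> dist (a i) = l \<and> E (a i) (b i) \<and> dist (b i) = Suc l) \<and>
     (\<forall>i\<in>I. \<forall>j\<in>I. i \<noteq> j \<longrightarrow> a i \<noteq> a j \<and> \<not> E (a i) (a j) \<and> \<not> E (a i) (b j) \<and> b i \<noteq> b j \<and> \<not> E (b i) (b j))"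

lemma descent:
  assumes n: "n > 0" and NK: "\<not> induced_sub (clique_star n) (V, E)"
    and NS: "\<not> induced_sub (star_star n) (V, E)"
  shows "fam l I a b \<Longrightarrow> card I \<ge> gg n l \<Longrightarrow> False"
proof (induction l arbitrary: I a b)
  case 0
  then obtain i j where ij: "i \<in> I" "j \<in> I" "i \<noteq> j"
    by (metis One_nat_def card.infinite card_le_Suc0_iff_eq gg.simps(1) not_less_eq_eq numeral_2_eq_2 zero_less_Suc linorder_not_less)
  then have "a i = r" "a j = r" using 0 dist0 by (auto simp: fam_def)
  then show False using ij 0 by (auto simp: fam_def)
next
  case (Suc l)
  note F = Suc.prems(1)[unfolded fam_def]
  show False
  proof (cases "\<exists>u\<in>V. dist u = l \<and> card {i \<in> I. E u (a i)} \<ge> n")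
    case True
    then obtain u where u: "u \<in> V" "dist u = l" "card {i \<in> I. E u (a i)} \<ge> n" by blast
    obtain J where J: "J \<subseteq> {i \<in> I. E u (a i)}" "card J = n"
      using obtain_subset_with_card_n[OF u(3)] by metis
    have fJ: "finite J" using J F finite_subset by (metis (no_types, lifting) mem_Collect_eq subsetI subset_iff)
    have "induced_sub (star_star (card J)) (V, E)"
    proof (rule spider_embed[OF fJ u(1)])
      show "\<forall>i\<in>J. a i \<in> V \<and> b i \<in> V \<and> E (a i) (b i) \<and> E u (a i) \<and> \<not> E u (b i) \<and> u \<noteq> b i"
      proof
        fix i assume "i \<in> J"
        then have i: "i \<in> I" "E u (a i)" using J by auto
        have "\<not> E u (b i)" using dist_edge2[of u "b i"] F i u(2) by auto
        moreover have "u \<noteq> b i" using F i u(2) by auto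
        ultimately show "a i \<in> V \<and> b i \<in> V \<and> E (a i) (b i) \<and> E u (a i) \<and> \<not> E u (b i) \<and> u \<noteq> b i"
          using F i by auto
      qed
      show "\<forall>i\<in>J. \<forall>j\<in>J. i \<noteq> j \<longrightarrow> a i \<noteq> a j \<and> \<not> E (a i) (a j) \<and> \<not> E (a i) (b j) \<and> b i \<noteq> b j \<and> \<not> E (b i) (b j)"
        using F J by blast
    qed
    then show False using NS J by simp
  next
    case False
    then have low: "\<forall>u\<in>V. dist u = l \<longrightarrow> card {i \<in> I. E u (a i)} < n" by auto
    have ex: "\<forall>i\<in>I. \<exists>q. E q (a i) \<and> dist q = l"
    proof
      fix i assume i: "i \<in> I"
      have "a i \<in> V" "dist (a i) = Suc l" using F i by auto
      then show "\<exists>q. E q (a i) \<and> dist q = l" by (rule dist_parent)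
    qed
    from bchoice[OF ex] obtain p where p0: "\<forall>i\<in>I. E (p i) (a i) \<and> dist (p i) = l" by blast
    have p: "\<And>i. i \<in> I \<Longrightarrow> E (p i) (a i) \<and> dist (p i) = l" using p0 by blast
    have pV: "i \<in> I \<Longrightarrow> p i \<in> V" for i using p EV by blast
    have out: "\<forall>i\<in>I. card {j \<in> I. E (p i) (a j)} < n"
    proof
      fix i assume i: "i \<in> I"
      show "card {j \<in> I. E (p i) (a j)} < n" using low[rule_format, OF pV[OF i]] p[OF i] by simp
    qed
    have ge: "card I \<ge> 2 * n * RN n (gg n l)" using Suc.prems(2) by simp
    have fI: "finite I" using F by simp
    obtain Y where Y: "Y \<subseteq> I" "card Y \<ge> RN n (gg n l)"
      "\<forall>i\<in>Y. \<forall>j\<in>Y. i \<noteq> j \<longrightarrow> \<not> E (p i) (a j)"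
      using greedy[OF n fI out ge] by blast
    have fY: "finite Y" using Y(1) fI finite_subset by blast
    have psym: "\<And>i j. E (p i) (p j) \<Longrightarrow> E (p j) (p i)" using Esym by blast
    obtain Z where Z: "Z \<subseteq> Y" "card Z = n \<and> (\<forall>i\<in>Z. \<forall>j\<in>Z. i \<noteq> j \<longrightarrow> E (p i) (p j)) \<or>
                card Z = gg n l \<and> (\<forall>i\<in>Z. \<forall>j\<in>Z. i \<noteq> j \<longrightarrow> \<not> E (p i) (p j))"
      using RN[where R="\<lambda>i j. E (p i) (p j)" and m=n and k="gg n l", OF fY Y(2) psym] by blast
    have fZ: "finite Z" using Z(1) fY finite_subset by blast
    have ZI: "Z \<subseteq> I" using Z(1) Y(1) by blast
    show False
    proof (cases "card Z = n \<and> (\<forall>i\<in>Z. \<forall>j\<in>Z. i \<noteq> j \<longrightarrow> E (p i) (p j))")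
      case True
      have "induced_sub (clique_star (card Z)) (V, E)"
      proof (rule sun_embed[OF fZ])
        show "\<forall>i\<in>Z. p i \<in> V \<and> a i \<in> V \<and> E (p i) (a i)"
        proof
          fix i assume i: "i \<in> Z"
          then have "i \<in> I" using ZI by blast
          then show "p i \<in> V \<and> a i \<in> V \<and> E (p i) (a i)" using pV p F by simp
        qed
        show "\<forall>i\<in>Z. \<forall>j\<in>Z. i \<noteq> j \<longrightarrow> E (p i) (p j) \<and> \<not> E (p i) (a j) \<and> a i \<noteq> a j \<and> \<not> E (a i) (a j)"
        proof (intro ballI impI)
          fix i j assume ij: "i \<in> Z" "j \<in> Z" "i \<noteq> j"
          then have ijI: "i \<in> I" "j \<in> I" using ZI by auto
          have "E (p i) (p j)" using True ij by blast
          moreover have "\<not> E (p i) (a j)" using Y(3) Z(1) ij by blast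
          moreover have "a i \<noteq> a j \<and> \<not> E (a i) (a j)" using F ijI ij(3) by simp
          ultimately show "E (p i) (p j) \<and> \<not> E (p i) (a j) \<and> a i \<noteq> a j \<and> \<not> E (a i) (a j)" by simp
        qed
      qed
      then show False using NK True by simp
    next
      case False
      then have Z2: "card Z = gg n l" "\<forall>i\<in>Z. \<forall>j\<in>Z. i \<noteq> j \<longrightarrow> \<not> E (p i) (p j)" using Z by auto
      have "fam l Z p a"
        unfolding fam_def
      proof (intro conjI)
        show "finite Z" by (rule fZ)
        show "\<forall>i\<in>Z. p i \<in> V \<and> a i \<in> V \<and> dist (p i) = l \<and> E (p i) (a i) \<and> dist (a i) = Suc l"
        proof
          fix i assume i: "i \<in> Z"
          then have "i \<in> I" using ZI by blast
          then show "p i \<in> V \<and> a i \<in> V \<and> dist (p i) = l \<and> E (p i) (a i) \<and> dist (a i) = Suc l" using pV p F by simp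
        qed
        show "\<forall>i\<in>Z. \<forall>j\<in>Z. i \<noteq> j \<longrightarrow> p i \<noteq> p j \<and> \<not> E (p i) (p j) \<and> \<not> E (p i) (a j) \<and> a i \<noteq> a j \<and> \<not> E (a i) (a j)"
        proof (intro ballI impI)
          fix i j assume ij: "i \<in> Z" "j \<in> Z" "i \<noteq> j"
          have ijI: "i \<in> I" "j \<in> I" using ZI ij by auto
          have ne: "\<not> E (p i) (a j)" using Y(3) Z(1) ij by blast
          moreover have "p i \<noteq> p j" using ne p[OF ijI(2)] by auto
          moreover have "\<not> E (p i) (p j)" using Z2 ij by blast
          moreover have "a i \<noteq> a j \<and> \<not> E (a i) (a j)" using F ijI ij(3) by simp
          ultimately show "p i \<noteq> p j \<and> \<not> E (p i) (p j) \<and> \<not> E (p i) (a j) \<and> a i \<noteq> a j \<and> \<not> E (a i) (a j)"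
            by simp
        qed
      qed
      then show False using Suc.IH Z2(1) by (metis order_refl)
    qed
  qed
qed

end

definition Gs :: "nat \<Rightarrow> nat" where "Gs n = (\<Sum>l<n. gg n l)"

context cgraph begin

lemma X_lemma:
  assumes "c \<in> V" "c' \<in> V" "c \<noteq> c'" "dist c = dist c'" "y \<in> Bs c" "E y c'"
  shows False
proof -
  have "c' \<in> Bs c" using F1[OF assms(5) _ assms(6)] assms(3) by auto
  then have "dist c' > dist c" using F2' assms(1) by blast
  then show False using assms(4) by simp
qed

lemma bounded:
  assumes n: "n > 0" and NK: "\<not> induced_sub (clique_star n) (V, E)"
    and NS: "\<not> induced_sub (star_star n) (V, E)"
    and NP: "\<not> induced_sub (path_graph n) (V, E)"
  shows "card {v \<in> V. sdeg (V, E) v \<ge> 2} < n * RN n (Gs n) + 1"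
proof -
  have dl: "dist x < n" if "x \<in> V" for x
    using path_embed[OF n that] NP by force
  define C' where "C' = {c \<in> V. c \<noteq> r \<and> sdeg (V, E) c \<ge> 2}"
  have fC': "finite C'" using finV by (simp add: C'_def)
  have ex: "\<forall>c\<in>C'. \<exists>d. d \<in> Bs c \<and> E c d"
  proof
    fix c assume "c \<in> C'"
    then have "c \<in> V" "c \<noteq> r" "sdeg (V, E) c \<ge> 2" by (auto simp: C'_def)
    then show "\<exists>d. d \<in> Bs c \<and> E c d" using F3 by blast
  qed
  from bchoice[OF ex] obtain d where d0: "\<forall>c\<in>C'. d c \<in> Bs c \<and> E c (d c)" by blast
  have d: "c \<in> C' \<Longrightarrow> d c \<in> Bs c \<and> E c (d c)" for c using d0 by blast
  have C'V: "c \<in> C' \<Longrightarrow> c \<in> V" for c by (simp add: C'_def)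
  have dV: "c \<in> C' \<Longrightarrow> d c \<in> V" for c using d by (simp add: Bs_def)
  have ddist: "c \<in> C' \<Longrightarrow> dist (d c) = Suc (dist c)" for c
  proof -
    assume c: "c \<in> C'"
    have "dist (d c) > dist c" using F2' d[OF c] C'V[OF c] by blast
    moreover have "dist (d c) \<le> dist c + 1" using dist_edge d[OF c] by blast
    ultimately show ?thesis by simp
  qed
  have pw: "\<not> E c (d c') \<and> d c \<noteq> d c' \<and> \<not> E (d c) (d c')"
    if c: "c \<in> C'" "c' \<in> C'" "c \<noteq> c'" "dist c = dist c'" for c c'
  proof (intro conjI)
    show "\<not> E c (d c')"
    proof
      assume "E c (d c')"
      then have "E (d c') c" by (rule Esym)
      then show False using X_lemma[of c' c "d c'"] c C'V d by auto
    qed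
    show "d c \<noteq> d c'"
    proof
      assume eq: "d c = d c'"
      have "E (d c) c'" using d[OF c(2)] eq Esym by auto
      then show False using X_lemma[of c c' "d c"] c C'V d by auto
    qed
    show "\<not> E (d c) (d c')"
    proof
      assume e: "E (d c) (d c')"
      have "d c' \<noteq> c" using ddist[OF c(2)] c(4) by auto
      then have "d c' \<in> Bs c" using F1[OF _ _ e] d[OF c(1)] by blast
      moreover have "E (d c') c'" using d[OF c(2)] Esym by blast
      ultimately show False using X_lemma[of c c' "d c'"] c C'V by auto
    qed
  qed
  let ?M = "RN n (Gs n)"
  have "card C' < n * ?M"
  proof (rule ccontr)
    assume "\<not> card C' < n * ?M"
    then have "card C' \<ge> n * ?M" by simp
    then obtain l where l: "l < n" "card {c \<in> C'. dist c = l} \<ge> ?M"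
      using pigeon[OF fC' _ _ n, of dist ?M] dl C'V by blast
    define L where "L = {c \<in> C'. dist c = l}"
    have fL: "finite L" using fC' by (simp add: L_def)
    have cL: "card L \<ge> ?M" using l by (simp add: L_def)
    obtain Z where Z: "Z \<subseteq> L" "card Z = n \<and> (\<forall>i\<in>Z. \<forall>j\<in>Z. i \<noteq> j \<longrightarrow> E i j) \<or>
                card Z = Gs n \<and> (\<forall>i\<in>Z. \<forall>j\<in>Z. i \<noteq> j \<longrightarrow> \<not> E i j)"
      using RN[where R=E and m=n and k="Gs n", OF fL cL Esym] by blast
    have fZ: "finite Z" using Z(1) fL finite_subset by blast
    have ZL: "i \<in> Z \<Longrightarrow> i \<in> C' \<and> dist i = l" for i using Z(1) by (auto simp: L_def)
    show False
    proof (cases "card Z = n \<and> (\<forall>i\<in>Z. \<forall>j\<in>Z. i \<noteq> j \<longrightarrow> E i j)")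
      case True
      have "induced_sub (clique_star (card Z)) (V, E)"
      proof (rule sun_embed[OF fZ, where a="\<lambda>x. x" and b=d])
        show "\<forall>i\<in>Z. i \<in> V \<and> d i \<in> V \<and> E i (d i)" using ZL C'V dV d by blast
        show "\<forall>i\<in>Z. \<forall>j\<in>Z. i \<noteq> j \<longrightarrow> E i j \<and> \<not> E i (d j) \<and> d i \<noteq> d j \<and> \<not> E (d i) (d j)"
        proof (intro ballI impI)
          fix i j assume ij: "i \<in> Z" "j \<in> Z" "i \<noteq> j"
          have "E i j" using True ij by blast
          moreover have "\<not> E i (d j) \<and> d i \<noteq> d j \<and> \<not> E (d i) (d j)"
            using pw[of i j] ZL[OF ij(1)] ZL[OF ij(2)] ij(3) by simp
          ultimately show "E i j \<and> \<not> E i (d j) \<and> d i \<noteq> d j \<and> \<not> E (d i) (d j)" by simp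
        qed
      qed
      then show False using NK True by simp
    next
      case False
      then have Z2: "card Z = Gs n" "\<forall>i\<in>Z. \<forall>j\<in>Z. i \<noteq> j \<longrightarrow> \<not> E i j" using Z by auto
      have "gg n l \<le> Gs n" unfolding Gs_def using l(1) by (intro member_le_sum) auto
      then obtain W where W: "W \<subseteq> Z" "card W = gg n l"
        using obtain_subset_with_card_n Z2(1) by metis
      have fW: "finite W" using W(1) fZ finite_subset by blast
      have "fam l W (\<lambda>x. x) d"
        unfolding fam_def
      proof (intro conjI)
        show "finite W" by (rule fW)
        show "\<forall>i\<in>W. i \<in> V \<and> d i \<in> V \<and> dist i = l \<and> E i (d i) \<and> dist (d i) = Suc l"
        proof
          fix i assume "i \<in> W"
          then have i: "i \<in> C'" "dist i = l" using W(1) ZL by auto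
          then show "i \<in> V \<and> d i \<in> V \<and> dist i = l \<and> E i (d i) \<and> dist (d i) = Suc l"
            using C'V dV d ddist by simp
        qed
        show "\<forall>i\<in>W. \<forall>j\<in>W. i \<noteq> j \<longrightarrow> i \<noteq> j \<and> \<not> E i j \<and> \<not> E i (d j) \<and> d i \<noteq> d j \<and> \<not> E (d i) (d j)"
        proof (intro ballI impI)
          fix i j assume ij: "i \<in> W" "j \<in> W" "i \<noteq> j"
          then have ijZ: "i \<in> Z" "j \<in> Z" using W(1) by auto
          have "\<not> E i j" using Z2(2) ijZ ij(3) by blast
          moreover have "\<not> E i (d j) \<and> d i \<noteq> d j \<and> \<not> E (d i) (d j)"
            using pw[of i j] ZL[OF ijZ(1)] ZL[OF ijZ(2)] ij(3) by simp
          ultimately show "i \<noteq> j \<and> \<not> E i j \<and> \<not> E i (d j) \<and> d i \<noteq> d j \<and> \<not> E (d i) (d j)"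
            using ij(3) by simp
        qed
      qed
      then show False using descent[OF n NK NS] W(2) by (metis order_refl)
    qed
  qed
  moreover have "{v \<in> V. sdeg (V, E) v \<ge> 2} \<subseteq> insert r C'" by (auto simp: C'_def)
  then have "card {v \<in> V. sdeg (V, E) v \<ge> 2} \<le> card (insert r C')"
    using fC' by (intro card_mono) auto
  moreover have "card (insert r C') \<le> card C' + 1" using fC' by (simp add: card_insert_if)
  ultimately show ?thesis by linarith
qed

end

lemma main_bound:
  fixes G :: "nat graph"
  assumes n: "n > 0" and G: "is_graph G" "connected_graph G"
    and NK: "\<not> induced_sub (clique_star n) G"
    and NS: "\<not> induced_sub (star_star n) G"
    and NP: "\<not> induced_sub (path_graph n) G"
  shows "card {v \<in> fst G. sdeg G v \<ge> 2} < n * RN n (Gs n) + 1"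
proof -
  obtain r where r: "r \<in> fst G" using G(2) unfolding connected_graph_def by blast
  have GG: "G = (fst G, snd G)" by simp
  interpret cgraph "fst G" "snd G" r
    by unfold_locales (use G r in simp_all)
  show ?thesis using bounded[OF n] NK NS NP by simp
qed

theorem theorem1p7:
  fixes \<H> :: "nat graph set"
  assumes "\<forall>H\<in>\<H>. is_graph H"
  shows "(\<exists>c::nat. \<forall>G::nat graph. is_graph G \<and> connected_graph G \<and> H_free \<H> G \<longrightarrow>
            card {v \<in> fst G. sdeg G v \<ge> 2} < c)
     \<longleftrightarrow> (\<exists>n::nat. n > 0 \<and> fam_le \<H> {clique_star n, star_star n, path_graph n})"
proof
  assume "\<exists>c::nat. \<forall>G::nat graph. is_graph G \<and> connected_graph G \<and> H_free \<H> G \<longrightarrow>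
            card {v \<in> fst G. sdeg G v \<ge> 2} < c"
  then obtain c where c: "\<And>G::nat graph. is_graph G \<Longrightarrow> connected_graph G \<Longrightarrow> H_free \<H> G \<Longrightarrow>
            card {v \<in> fst G. sdeg G v \<ge> 2} < c" by blast
  show "\<exists>n::nat. n > 0 \<and> fam_le \<H> {clique_star n, star_star n, path_graph n}"
  proof (rule ccontr)
    assume nt: "\<not> ?thesis"
    have pos: "(0::nat) < c + 2" by simp
    have "\<not> fam_le \<H> {clique_star (c + 2), star_star (c + 2), path_graph (c + 2)}"
      using nt pos by blast
    then obtain H2 where H2: "H2 \<in> {clique_star (c + 2), star_star (c + 2), path_graph (c + 2)}"
      "\<forall>H1\<in>\<H>. \<not> induced_sub H1 H2"
      unfolding fam_le_def by blast
    have hf: "H_free \<H> H2" using H2(2) by (simp add: H_free_def)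
    have m: "is_graph H2 \<and> connected_graph H2 \<and> \<not> card {v \<in> fst H2. sdeg H2 v \<ge> 2} < c"
      by (rule many_cuts[OF H2(1)])
    have "card {v \<in> fst H2. sdeg H2 v \<ge> 2} < c" using c[OF conjunct1[OF m] conjunct1[OF conjunct2[OF m]] hf] .
    then show False using m by simp
  qed
next
  assume "\<exists>n::nat. n > 0 \<and> fam_le \<H> {clique_star n, star_star n, path_graph n}"
  then obtain n where n: "n > 0" "fam_le \<H> {clique_star n, star_star n, path_graph n}" by blast
  show "\<exists>c::nat. \<forall>G::nat graph. is_graph G \<and> connected_graph G \<and> H_free \<H> G \<longrightarrow>
            card {v \<in> fst G. sdeg G v \<ge> 2} < c"
  proof (intro exI[of _ "n * RN n (Gs n) + 1"] allI impI)
    fix G :: "nat graph"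
    assume a: "is_graph G \<and> connected_graph G \<and> H_free \<H> G"
    have no: "\<not> induced_sub K G" if "K \<in> {clique_star n, star_star n, path_graph n}" for K
    proof
      assume KG: "induced_sub K G"
      have ex: "\<exists>H1\<in>\<H>. induced_sub H1 K" using bspec[OF n(2)[unfolded fam_le_def] that] .
      then obtain H1 where H1: "H1 \<in> \<H>" "induced_sub H1 K" by blast
      have hf: "\<forall>H\<in>\<H>. \<not> induced_sub H G" using conjunct2[OF conjunct2[OF a]] unfolding H_free_def .
      moreover have "\<not> induced_sub H1 G"
        using bspec[OF hf H1(1)] .
      moreover have "induced_sub H1 G" by (rule induced_sub_trans[OF H1(2) KG])
      ultimately show False by simp
    qed
    show "card {v \<in> fst G. sdeg G v \<ge> 2} < n * RN n (Gs n) + 1"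
      using main_bound[OF n(1) conjunct1[OF a] conjunct1[OF conjunct2[OF a]]
          no[of "clique_star n"] no[of "star_star n"] no[of "path_graph n"]] by simp
  qed
qed

end
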